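(* Let $\Gamma$ be a signed graph on $n$ vertices and let $x=(x_1,\dots,x_n)^{\top}$ be a unit eigenvector of the adjacency matrix $A(\Gamma)$ corresponding to its largest eigenvalue $\lambda_1(\Gamma)$. Let $k$ be an integer. If $\lambda_1(\Gamma) > n-k$, then $x$ has at most $k-2$ zero components.
   Context: A signed graph $\Gamma=(G,\sigma)$ is a simple graph $G$ with a sign function $\sigma:E(G)\to\{-1,+1\}$. Its adjacency matrix $A(\Gamma)=(a_{ij})$ has $a_{ij}=\sigma(v_iv_j)$ if $v_i\sim v_j$ and $a_{ij}=0$ otherwise; $\lambda_1(\Gamma)$ denotes the largest eigenvalue of $A(\Gamma)$. *)

theory Defs
  imports "HOL-Analysis.Analysis"
begin

definition signed_graph :: "('n \<Rightarrow> 'n \<Rightarrow> bool) \<Rightarrow> ('n \<Rightarrow> 'n \<Rightarrow> int) \<Rightarrow> bool" where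
  "signed_graph E \<sigma> \<longleftrightarrow>
     (\<forall>u. \<not> E u u) \<and> (\<forall>u v. E u v \<longrightarrow> E v u) \<and>
     (\<forall>u v. E u v \<longrightarrow> \<sigma> u v = \<sigma> v u \<and> \<sigma> u v \<in> {-1, 1})"

definition adj_matrix :: "('n::finite \<Rightarrow> 'n \<Rightarrow> bool) \<Rightarrow> ('n \<Rightarrow> 'n \<Rightarrow> int) \<Rightarrow> real^'n^'n" where
  "adj_matrix E \<sigma> = (\<chi> i j. if E i j then of_int (\<sigma> i j) else 0)"

definition is_eigenvalue :: "real^'n^'n \<Rightarrow> real \<Rightarrow> bool" where
  "is_eigenvalue A l \<longleftrightarrow> (\<exists>x. x \<noteq> 0 \<and> A *v x = l *\<^sub>R x)"

definition largest_eigenvalue :: "real^'n^'n \<Rightarrow> real" where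
  "largest_eigenvalue A = Max {l. is_eigenvalue A l}"

end

theory Submission
  imports Defs
begin

theorem lemma3p3:
  fixes E :: "'n::finite \<Rightarrow> 'n \<Rightarrow> bool" and \<sigma> :: "'n \<Rightarrow> 'n \<Rightarrow> int"
    and x :: "real^'n" and k :: int
  assumes "signed_graph E \<sigma>"
    and "norm x = 1"
    and "adj_matrix E \<sigma> *v x = largest_eigenvalue (adj_matrix E \<sigma>) *\<^sub>R x"
    and "largest_eigenvalue (adj_matrix E \<sigma>) > real CARD('n) - real_of_int k"
  shows "int (card {i. x $ i = 0}) \<le> k - 2"
proof -
  define l where "l = largest_eigenvalue (adj_matrix E \<sigma>)"
  define A where "A = adj_matrix E \<sigma>"
  define S where "S = {i. x $ i \<noteq> 0}"
  define Z where "Z = {i. x $ i = 0}"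
  have eq: "A *v x = l *\<^sub>R x" using assms(3) by (simp add: A_def l_def)
  have sg: "\<And>u. \<not> E u u" "\<And>u v. E u v \<Longrightarrow> \<sigma> u v \<in> {-1, 1}"
    using assms(1) unfolding signed_graph_def by auto
  have Aij: "\<And>i j. \<bar>A $ i $ j\<bar> \<le> 1" "\<And>i. A $ i $ i = 0"
    unfolding A_def adj_matrix_def using sg by (auto, fastforce)
  obtain i where imax: "\<And>j. \<bar>x $ j\<bar> \<le> \<bar>x $ i\<bar>"
  proof -
    define m where "m = Max (range (\<lambda>j. \<bar>x $ j\<bar>))"
    have "m \<in> range (\<lambda>j. \<bar>x $ j\<bar>)" unfolding m_def
      by (rule Max_in) auto
    then obtain i where mi: "m = \<bar>x $ i\<bar>" by (rule rangeE)
    have "\<And>j. \<bar>x $ j\<bar> \<le> m" unfolding m_def by (rule Max_ge) auto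
    then show ?thesis using that mi by blast
  qed
  have xi: "x $ i \<noteq> 0"
  proof
    assume "x $ i = 0"
    then have "\<And>j. x $ j = 0" using imax by (metis abs_le_zero_iff abs_zero)
    then have "x = 0" by (simp add: vec_eq_iff)
    then show False using assms(2) by simp
  qed
  have iS: "i \<in> S" using xi S_def by simp
  have "l * x $ i = (\<Sum>j\<in>UNIV. A $ i $ j * x $ j)"
    using arg_cong[OF eq, of "\<lambda>v. v $ i"] by (simp add: matrix_vector_mult_def)
  then have "\<bar>l\<bar> * \<bar>x $ i\<bar> \<le> (\<Sum>j\<in>UNIV. \<bar>A $ i $ j * x $ j\<bar>)"
    by (metis abs_mult sum_abs)
  also have "\<dots> \<le> (\<Sum>j\<in>UNIV. if j \<in> S - {i} then \<bar>x $ i\<bar> else 0)"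
  proof (rule sum_mono)
    fix j
    show "\<bar>A $ i $ j * x $ j\<bar> \<le> (if j \<in> S - {i} then \<bar>x $ i\<bar> else 0)"
    proof (cases "j \<in> S - {i}")
      case True
      then show ?thesis using Aij(1)[of i j] imax[of j]
        by (simp add: abs_mult) (metis abs_ge_zero mult_1 mult_mono zero_le_one)
    next
      case False
      then show ?thesis using Aij(2)[of i] S_def by auto
    qed
  qed
  also have "\<dots> = real (card (S - {i})) * \<bar>x $ i\<bar>"
    by (simp add: sum.If_cases set_diff_eq)
  finally have "\<bar>l\<bar> \<le> real (card (S - {i}))" using xi by simp
  moreover have "card S \<ge> 1" using iS by (metis One_nat_def Suc_leI card_gt_0_iff empty_iff finite)
  ultimately have l1: "l \<le> real (card S) - 1" using iS by (simp add: of_nat_diff)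
  have "card S + card Z = CARD('n)"
  proof -
    have "S \<union> Z = UNIV" "S \<inter> Z = {}" by (auto simp: S_def Z_def)
    then show ?thesis by (metis card_Un_disjoint finite)
  qed
  then show ?thesis using l1 assms(4) unfolding l_def[symmetric] Z_def by simp
qed

end
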